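(* Let $a,b,c\in\mathbb{R}\setminus\{0\}$ with $b^2-4ac>0$. Let $\{P_m(z)\}_{m\geq 0}$ be the sequence of functions of $z$ generated by \[ \sum_{m=0}^\infty P_m(z)\, t^m=\frac{1}{(at^2+bt+c)(1-tz)}. \] Then $\lim \mathcal{Z}(P_m)$ exists and \[ \lim \mathcal{Z}(P_m)=\left\{z\in\mathbb{C}: |z|=\frac{1}{|\alpha|}\right\}, \] where $\alpha$ is the zero of $at^2+bt+c$ of smallest modulus.
   Context: A sequence $\{P_m(z)\}$ is generated by $f(t,z)$ if, for each $z\in\mathbb{C}$, $f(t,z)$ is analytic in $t$ in a neighborhood of $t=0$ and $P_m(z)$ is the coefficient of $t^m$ in the power series expansion of $f(t,z)$ in $t$ about $0$. For a sequence of functions $f_m$ analytic on a region $D$ (here $D=\mathbb{C}$), $\mathcal{Z}(f_m)$ denotes the set of zeros of $f_m$ in $D$. $\liminf\mathcal{Z}(f_m)$ is the set of $z^*\in D$ such that for every $r>0$ there is $N$ with $B(r,z^* )\cap\mathcal{Z}(f_m)\neq\emptyset$ for all $m>N$; $\limsup\mathcal{Z}(f_m)$ is the set of $z^*\in D$ such that for every $r>0$ and every $N$ there is $m>N$ with $B(r,z^* )\cap\mathcal{Z}(f_m)\neq\emptyset$. When these coincide, $\lim\mathcal{Z}(f_m)$ denotes the common set. Here $B(r,z^* )$ is the open disk of radius $r$ centered at $z^*$. *)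

theory Defs
  imports "HOL-Complex_Analysis.Complex_Analysis"
begin

definition gen_seq :: "(complex \<Rightarrow> complex \<Rightarrow> complex) \<Rightarrow> nat \<Rightarrow> complex \<Rightarrow> complex" where
  "gen_seq f m z = (deriv ^^ m) (\<lambda>t. f t z) 0 / fact m"

definition zero_set :: "(complex \<Rightarrow> complex) \<Rightarrow> complex set" where
  "zero_set f = {z. f z = 0}"

definition liminf_zeros :: "(nat \<Rightarrow> complex \<Rightarrow> complex) \<Rightarrow> complex set" where
  "liminf_zeros f = {z. \<forall>r>0. \<exists>N. \<forall>m>N. ball z r \<inter> zero_set (f m) \<noteq> {}}"

definition limsup_zeros :: "(nat \<Rightarrow> complex \<Rightarrow> complex) \<Rightarrow> complex set" where
  "limsup_zeros f = {z. \<forall>r>0. \<forall>N. \<exists>m>N. ball z r \<inter> zero_set (f m) \<noteq> {}}"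

end

theory Submission
  imports Defs "HOL-Real_Asymp.Real_Asymp"
begin

definition EE :: "real \<Rightarrow> nat \<Rightarrow> complex \<Rightarrow> complex" where
  "EE s m w = (\<Sum>i=0..m. (\<Sum>k=0..i. complex_of_real s ^ k) * w ^ (m - i))"

lemma EE_Suc: "EE s (Suc m) w = w * EE s m w + (\<Sum>k=0..Suc m. complex_of_real s ^ k)"
proof -
  have "EE s (Suc m) w = (\<Sum>i=0..m. (\<Sum>k=0..i. complex_of_real s ^ k) * w ^ (Suc m - i)) + (\<Sum>k=0..Suc m. complex_of_real s ^ k)"
    unfolding EE_def by (simp add: sum.atLeast0_atMost_Suc)
  also have "(\<Sum>i=0..m. (\<Sum>k=0..i. complex_of_real s ^ k) * w ^ (Suc m - i)) = w * EE s m w"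
    unfolding EE_def sum_distrib_left
    by (rule sum.cong) (auto simp: Suc_diff_le)
  finally show ?thesis .
qed

lemma gsum: "(1 - x) * (\<Sum>k=0..i. (x::complex) ^ k) = 1 - x ^ Suc i"
  using sum_gp_basic[of x i] by (simp add: atLeast0AtMost)

lemma EE_T: "(w - 1) * (w - of_real s) * (1 - of_real s) * EE s m w =
   (1 - of_real s) * w ^ (m+2) - (1 - of_real s ^ (m+2)) * w + of_real s * (1 - of_real s ^ (m+1))"
proof (induction m)
  case 0
  then show ?case by (simp add: EE_def algebra_simps power2_eq_square)
next
  case (Suc m)
  have g: "(1 - of_real s) * (\<Sum>k=0..Suc m. complex_of_real s ^ k) = 1 - of_real s ^ (m+2)"
    using gsum[of "of_real s" "Suc m"] by simp
  have "(w - 1) * (w - of_real s) * (1 - of_real s) * EE s (Suc m) w =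
     w * ((w - 1) * (w - of_real s) * (1 - of_real s) * EE s m w) + (w - 1) * (w - of_real s) * ((1 - of_real s) * (\<Sum>k=0..Suc m. complex_of_real s ^ k))"
    by (simp add: EE_Suc algebra_simps)
  also have "\<dots> = w * ((1 - of_real s) * w ^ (m+2) - (1 - of_real s ^ (m+2)) * w + of_real s * (1 - of_real s ^ (m+1))) + (w - 1) * (w - of_real s) * (1 - of_real s ^ (m+2))"
    using Suc g by simp
  also have "\<dots> = (1 - of_real s) * w ^ (Suc m+2) - (1 - of_real s ^ (Suc m+2)) * w + of_real s * (1 - of_real s ^ (Suc m+1))"
    by (simp add: algebra_simps power2_eq_square)
  finally show ?case .
qed

definition BB :: "real \<Rightarrow> nat \<Rightarrow> complex \<Rightarrow> complex" where
  "BB s m w = (\<Sum>i=0..m. complex_of_real s ^ i * w ^ (m - i))"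

lemma BB_Suc: "BB s (Suc m) w = w * BB s m w + of_real s ^ Suc m"
proof -
  have "BB s (Suc m) w = (\<Sum>i=0..m. complex_of_real s ^ i * w ^ (Suc m - i)) + of_real s ^ Suc m"
    unfolding BB_def by (simp add: sum.atLeast0_atMost_Suc)
  also have "(\<Sum>i=0..m. complex_of_real s ^ i * w ^ (Suc m - i)) = w * BB s m w"
    unfolding BB_def sum_distrib_left
    by (rule sum.cong) (auto simp: Suc_diff_le)
  finally show ?thesis .
qed

lemma EE_B: "(w - 1) * (1 - of_real s) * EE s m w = w ^ (m+1) - 1 - of_real s * (w - 1) * BB s m w"
proof (induction m)
  case 0
  then show ?case by (simp add: EE_def BB_def algebra_simps)
next
  case (Suc m)
  have g: "(1 - of_real s) * (\<Sum>k=0..Suc m. complex_of_real s ^ k) = 1 - of_real s ^ (m+2)"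
    using gsum[of "of_real s" "Suc m"] by simp
  have "(w - 1) * (1 - of_real s) * EE s (Suc m) w =
     w * ((w - 1) * (1 - of_real s) * EE s m w) + (w - 1) * ((1 - of_real s) * (\<Sum>k=0..Suc m. complex_of_real s ^ k))"
    by (simp add: EE_Suc algebra_simps)
  also have "\<dots> = w * (w ^ (m+1) - 1 - of_real s * (w - 1) * BB s m w) + (w - 1) * (1 - of_real s ^ (m+2))"
    using Suc g by simp
  also have "\<dots> = w ^ (Suc m+1) - 1 - of_real s * (w - 1) * BB s (Suc m) w"
    by (simp add: BB_Suc algebra_simps)
  finally show ?case .
qed

lemma BB_bound:
  assumes "\<bar>s\<bar> \<le> \<sigma>" "cmod w \<le> \<sigma>"
  shows "cmod (BB s m w) \<le> real (m+1) * \<sigma> ^ m"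
proof -
  have "cmod (BB s m w) \<le> (\<Sum>i=0..m. cmod (complex_of_real s ^ i * w ^ (m - i)))"
    unfolding BB_def by (rule norm_sum)
  also have "\<dots> \<le> (\<Sum>i=0..m. \<sigma> ^ m)"
  proof (rule sum_mono)
    fix i assume i: "i \<in> {0..m}"
    have "cmod (complex_of_real s ^ i * w ^ (m - i)) = \<bar>s\<bar> ^ i * cmod w ^ (m - i)"
      by (simp add: norm_mult norm_power)
    also have "\<dots> \<le> \<sigma> ^ i * \<sigma> ^ (m - i)"
      using assms by (intro mult_mono power_mono) (auto intro: zero_le_power order_trans[OF abs_ge_zero])
    also have "\<dots> = \<sigma> ^ m" using i by (simp flip: power_add)
    finally show "cmod (complex_of_real s ^ i * w ^ (m - i)) \<le> \<sigma> ^ m" .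
  qed
  also have "\<dots> = real (m+1) * \<sigma> ^ m" by simp
  finally show ?thesis .
qed

lemma C1:
  assumes s: "\<bar>s\<bar> < 1" and w0: "cmod w0 > 1"
  shows "\<exists>r>0. \<exists>N. \<forall>m>N. \<forall>w\<in>ball w0 r. EE s m w \<noteq> 0"
proof -
  define \<rho> where "\<rho> = (1 + cmod w0) / 2"
  have \<rho>1: "\<rho> > 1" using w0 by (simp add: \<rho>_def)
  have s1: "1 - s > 0" using s by auto
  obtain n where n: "4 / (1 - s) < \<rho> ^ n" using real_arch_pow[OF \<rho>1] by blast
  have "\<forall>m>n. \<forall>w\<in>ball w0 (cmod w0 - \<rho>). EE s m w \<noteq> 0"
  proof (intro allI impI ballI)
    fix m w assume m: "m > n" and w: "w \<in> ball w0 (cmod w0 - \<rho>)"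
    have wr: "cmod w > \<rho>" using w norm_triangle_ineq2[of w0 w] by (auto simp: dist_norm norm_minus_commute)
    have w1: "cmod w \<ge> 1" using wr \<rho>1 by simp
    have "\<rho> ^ n \<le> \<rho> ^ (m+1)" using m \<rho>1 by (intro power_increasing) auto
    also have "\<dots> \<le> cmod w ^ (m+1)" using wr \<rho>1 by (intro power_mono) auto
    finally have "(1 - s) * \<rho> ^ n \<le> (1 - s) * cmod w ^ (m+1)" using s1 by simp
    moreover have "4 < (1 - s) * \<rho> ^ n" using n s1 by (simp add: field_simps)
    ultimately have big: "4 < (1 - s) * cmod w ^ (m+1)" by linarith
    show "EE s m w \<noteq> 0"
    proof
      assume E: "EE s m w = 0"
      have T: "(1 - of_real s) * w ^ (m+2) = (1 - of_real s ^ (m+2)) * w - of_real s * (1 - of_real s ^ (m+1))"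
        using EE_T[of w s m] E by (simp add: algebra_simps)
      have sk: "\<And>k. cmod (1 - complex_of_real s ^ k) \<le> 2"
      proof -
        fix k
        have "cmod (1 - complex_of_real s ^ k) = \<bar>1 - s ^ k\<bar>" by (metis norm_of_real of_real_1 of_real_diff of_real_power)
        also have "\<dots> \<le> 1 + \<bar>s\<bar> ^ k" by (metis abs_one power_abs abs_triangle_ineq4)
        also have "\<bar>s\<bar> ^ k \<le> 1" using s by (intro power_le_one) auto
        finally show "cmod (1 - complex_of_real s ^ k) \<le> 2" by simp
      qed
      have "(1 - s) * cmod w ^ (m+2) = cmod ((1 - of_real s) * w ^ (m+2))"
        using s1 by (simp add: norm_mult norm_power) (metis abs_of_pos norm_of_real of_real_1 of_real_diff s1)
      also have "\<dots> \<le> cmod ((1 - of_real s ^ (m+2)) * w) + cmod (of_real s * (1 - of_real s ^ (m+1)))"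
        unfolding T by (rule norm_triangle_ineq4)
      also have "\<dots> \<le> 2 * cmod w + 1 * 2"
        unfolding norm_mult using sk[of "m+2"] sk[of "m+1"] s by (intro add_mono mult_mono) (simp_all del: power_Suc)
      also have "\<dots> \<le> 4 * cmod w" using w1 by simp
      finally have "(1 - s) * cmod w ^ (m+1) * cmod w \<le> 4 * cmod w" by (simp add: algebra_simps)
      then have "(1 - s) * cmod w ^ (m+1) \<le> 4" using w1
        by (metis mult_le_cancel_right_pos mult.commute less_le_trans zero_less_one)
      with big show False by simp
    qed
  qed
  moreover have "cmod w0 - \<rho> > 0" using w0 by (simp add: \<rho>_def)
  ultimately show ?thesis by blast
qed

lemma C2:
  assumes s: "\<bar>s\<bar> < 1" and w0: "cmod w0 < 1"
  shows "\<exists>r>0. \<exists>N. \<forall>m>N. \<forall>w\<in>ball w0 r. EE s m w \<noteq> 0"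
proof -
  define \<rho> where "\<rho> = (1 + cmod w0) / 2"
  define \<sigma> where "\<sigma> = max \<bar>s\<bar> \<rho>"
  have \<rho>1: "\<rho> < 1" "\<rho> \<ge> 0" using w0 by (auto simp: \<rho>_def)
  have \<sigma>1: "\<sigma> < 1" "\<sigma> \<ge> 0" using \<rho>1 s by (auto simp: \<sigma>_def)
  have s1: "1 - s > 0" using s by auto
  have l1: "(\<lambda>m. \<rho> ^ (m+1)) \<longlonglongrightarrow> 0"
    using LIMSEQ_power_zero[of \<rho>] \<rho>1 LIMSEQ_Suc by fastforce
  have l2: "(\<lambda>m. real m * \<sigma> ^ m) \<longlonglongrightarrow> 0"
    using powser_times_n_limit_0[of \<sigma>] \<sigma>1 by simp
  have l3: "(\<lambda>m. \<sigma> ^ m) \<longlonglongrightarrow> 0"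
    using LIMSEQ_power_zero[of \<sigma>] \<sigma>1 by simp
  have "(\<lambda>m. \<rho> ^ (m+1) + 2 * (real m * \<sigma> ^ m + \<sigma> ^ m)) \<longlonglongrightarrow> 0 + 2 * (0 + 0)"
    by (intro tendsto_intros l1 l2 l3)
  then have "eventually (\<lambda>m. \<rho> ^ (m+1) + 2 * (real m * \<sigma> ^ m + \<sigma> ^ m) < 1) sequentially"
    by (intro order_tendstoD) auto
  then obtain N where N: "\<And>m. m \<ge> N \<Longrightarrow> \<rho> ^ (m+1) + 2 * (real (m+1) * \<sigma> ^ m) < 1"
    unfolding eventually_sequentially by (auto simp: algebra_simps)
  have "\<forall>m>N. \<forall>w\<in>ball w0 (\<rho> - cmod w0). EE s m w \<noteq> 0"
  proof (intro allI impI ballI)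
    fix m w assume m: "m > N" and w: "w \<in> ball w0 (\<rho> - cmod w0)"
    have wr: "cmod w < \<rho>" using w norm_triangle_ineq[of w0 "w - w0"] by (auto simp: dist_norm norm_minus_commute)
    show "EE s m w \<noteq> 0"
    proof
      assume E: "EE s m w = 0"
      have T: "w ^ (m+1) - 1 = of_real s * (w - 1) * BB s m w"
        using EE_B[of w s m] E by (simp add: algebra_simps)
      have "cmod w ^ (m+1) \<le> \<rho> ^ (m+1)" by (rule power_mono) (use wr in auto)
      then have "1 - \<rho> ^ (m+1) \<le> 1 - cmod w ^ (m+1)" by simp
      also have "\<dots> \<le> cmod (w ^ (m+1) - 1)"
        using norm_triangle_ineq2[of 1 "w^(m+1)"] by (simp add: norm_power norm_minus_commute norm_mult)
      also have "\<dots> = \<bar>s\<bar> * cmod (w - 1) * cmod (BB s m w)" unfolding T by (simp add: norm_mult)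
      also have "\<dots> \<le> 1 * 2 * (real (m+1) * \<sigma> ^ m)"
      proof (intro mult_mono)
        show "cmod (w - 1) \<le> 2" using norm_triangle_ineq4[of w 1] wr \<rho>1 by simp
        show "cmod (BB s m w) \<le> real (m+1) * \<sigma> ^ m"
          by (rule BB_bound) (use wr in \<open>auto simp: \<sigma>_def\<close>)
      qed (use s in auto)
      finally show False using N[of m] m by simp
    qed
  qed
  moreover have "\<rho> - cmod w0 > 0" using w0 by (simp add: \<rho>_def)
  ultimately show ?thesis by blast
qed

lemma norm_Ln_bound: "z \<noteq> 0 \<Longrightarrow> cmod (Ln z) \<le> \<bar>ln (cmod z)\<bar> + pi"
proof -
  assume z: "z \<noteq> 0"
  have "cmod (Ln z) \<le> \<bar>Re (Ln z)\<bar> + \<bar>Im (Ln z)\<bar>" by (rule cmod_le)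
  moreover have "\<bar>Im (Ln z)\<bar> \<le> pi" using mpi_less_Im_Ln[OF z] Im_Ln_le_pi[OF z] by auto
  ultimately show ?thesis using z by simp
qed

lemma choose_c:
  assumes "cmod w0 = 1" "r > 0"
  shows "\<exists>c. cmod c = 1 \<and> c \<noteq> 1 \<and> cmod (c - w0) < r / 2"
proof (cases "w0 = 1")
  case False
  then show ?thesis using assms by (intro exI[of _ w0]) auto
next
  case True
  define t where "t = min (r/4) (1/2)"
  have t: "t > 0" "t \<le> 1/2" "t \<le> r/4" using assms by (auto simp: t_def)
  define c where "c = exp (\<i> * complex_of_real t)"
  have n: "cmod (\<i> * complex_of_real t) = t" using t by (simp add: norm_mult)
  have "cmod (c - 1) \<le> 3/2 * t" using norm_exp_bounds(2)[of "\<i> * complex_of_real t"] n t by (simp add: c_def)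
  moreover have "cmod (c - 1) \<ge> 1/2 * t" using norm_exp_bounds(1)[of "\<i> * complex_of_real t"] n t by (simp add: c_def)
  ultimately show ?thesis using True t by (intro exI[of _ c]) (auto simp: c_def)
qed

lemma div_m1: "D \<noteq> 0 \<Longrightarrow> X / D - 1 = (X - D) / (D::complex)"
  by (simp add: diff_divide_distrib)

lemma C3:
  assumes s: "\<bar>s\<bar> < 1" and w0: "cmod w0 = 1" and r: "r > 0"
  shows "\<exists>N. \<forall>m>N. \<exists>w\<in>ball w0 r. EE s m w = 0"
proof -
  obtain c where c: "cmod c = 1" "c \<noteq> 1" "cmod (c - w0) < r / 2"
    using choose_c[OF w0 r] by blast
  define \<rho> where "\<rho> = min (r/4) (min (cmod (c - 1) / 2) ((1 - \<bar>s\<bar>) / 8))"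
  have \<rho>: "\<rho> > 0" "\<rho> \<le> r/4" "\<rho> < cmod (c - 1)" "\<rho> \<le> (1 - \<bar>s\<bar>) / 8"
  proof -
    have "cmod (c - 1) > 0" using c(2) by simp
    then show "\<rho> > 0" "\<rho> \<le> r/4" "\<rho> < cmod (c - 1)"
      using r s unfolding \<rho>_def by (auto simp: min_less_iff_disj min_le_iff_disj)
    show "\<rho> \<le> (1 - \<bar>s\<bar>) / 8" unfolding \<rho>_def by (intro min.coboundedI2 min.cobounded2)
  qed
  define S where "S = complex_of_real s"
  have s1: "1 - S \<noteq> 0" using s by (auto simp: S_def)
  have cs: "cmod (c - S) \<ge> 1 - \<bar>s\<bar>"
    using norm_triangle_ineq2[of c S] c by (auto simp: S_def)
  have cs0: "c - S \<noteq> 0" using cs s by auto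
  define g0 where "g0 = (c - S) / (1 - S)"
  have g0: "g0 \<noteq> 0" using cs0 s1 by (simp add: g0_def)
  define M where "M = \<bar>ln (cmod g0)\<bar> + pi"
  have M0: "M \<ge> 0" by (simp add: M_def)
  have l1: "(\<lambda>m. 3 * \<bar>s\<bar> ^ (m+2)) \<longlonglongrightarrow> 3 * 0"
    using LIMSEQ_power_zero[of "\<bar>s\<bar>"] s LIMSEQ_ignore_initial_segment[of _ 0 2]
    by (intro tendsto_intros) fastforce
  have l2: "(\<lambda>m. 3/2 * (M + 1/2) / real (m+2)) \<longlonglongrightarrow> 0"
    by real_asymp
  have ev1: "eventually (\<lambda>m. 3 * \<bar>s\<bar> ^ (m+2) < (1 - \<bar>s\<bar>) / 8) sequentially"
    using order_tendstoD(2)[OF l1, of "(1 - \<bar>s\<bar>) / 8"] s by simp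
  have ev2: "eventually (\<lambda>m. 3/2 * (M + 1/2) / real (m+2) < \<rho>) sequentially"
    using order_tendstoD(2)[OF l2, of \<rho>] \<rho> by simp
  have ev3: "eventually (\<lambda>m. 3/2 * (M + 1/2) / real (m+2) < 3/4) sequentially"
    using order_tendstoD(2)[OF l2, of "3/4"] by simp
  obtain N where N: "\<And>m. m \<ge> N \<Longrightarrow> 3 * \<bar>s\<bar> ^ (m+2) < (1 - \<bar>s\<bar>) / 8
     \<and> 3/2 * (M + 1/2) / real (m+2) < \<rho> \<and> 3/2 * (M + 1/2) / real (m+2) < 3/4"
    using eventually_conj[OF ev1 eventually_conj[OF ev2 ev3]] unfolding eventually_sequentially by blast
  have "\<forall>m>N. \<exists>w\<in>ball w0 r. EE s m w = 0"
  proof (intro allI impI)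
    fix m assume m: "m > N"
    define n where "n = m + 2"
    have n0: "real n > 0" by (simp add: n_def)
    have Nm: "3 * \<bar>s\<bar> ^ n < (1 - \<bar>s\<bar>) / 8" "3/2 * (M + 1/2) / real n < \<rho>" "3/2 * (M + 1/2) / real n < 3/4"
      using N[of m] m by (auto simp: n_def)
    define gn where "gn = (\<lambda>w. ((w - S) - S ^ n * (w - 1)) / (1 - S))"
    define K where "K = Ln (g0 / c ^ n)"
    have K: "cmod K \<le> M"
    proof -
      have "g0 / c ^ n \<noteq> 0" using g0 c by auto
      then have "cmod K \<le> \<bar>ln (cmod (g0 / c ^ n))\<bar> + pi" unfolding K_def by (rule norm_Ln_bound)
      also have "cmod (g0 / c ^ n) = cmod g0" using c by (simp add: norm_divide norm_power)
      finally show ?thesis by (simp add: M_def)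
    qed
    define \<phi> where "\<phi> = (\<lambda>w. c * exp ((K + Ln (gn w / g0)) / of_nat n))"
    have key: "cmod (gn w / g0 - 1) \<le> 1/4" if w: "w \<in> cball c \<rho>" for w
    proof -
      have eq: "gn w / g0 - 1 = ((w - c) - S ^ n * (w - 1)) / (c - S)"
      proof -
        have "gn w / g0 = ((w - S) - S ^ n * (w - 1)) / (c - S)"
          using s1 by (simp add: gn_def g0_def)
        also have "\<dots> - 1 = ((w - S) - S ^ n * (w - 1) - (c - S)) / (c - S)"
          by (rule div_m1[OF cs0])
        finally show ?thesis by (simp add: algebra_simps)
      qed
      have wc: "cmod (w - c) \<le> \<rho>" using w by (simp add: dist_norm norm_minus_commute)
      have "cmod w \<le> cmod c + cmod (w - c)" using norm_triangle_ineq[of c "w - c"] by simp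
      moreover have "\<rho> \<le> 1/8" using \<rho>(4) abs_ge_zero[of s] by (simp add: field_simps)
      ultimately have "cmod w \<le> 2" using wc c(1) by linarith
      then have w1: "cmod (w - 1) \<le> 3" using norm_triangle_ineq4[of w 1] by simp
      have "cmod (S ^ n * (w - 1)) = \<bar>s\<bar> ^ n * cmod (w - 1)" by (simp add: S_def norm_mult norm_power)
      also have "\<dots> \<le> \<bar>s\<bar> ^ n * 3" using w1 by (intro mult_left_mono) auto
      finally have "cmod ((w - c) - S ^ n * (w - 1)) \<le> (1 - \<bar>s\<bar>) / 4"
        using norm_triangle_ineq4[of "w - c" "S ^ n * (w - 1)"] wc \<rho> Nm by linarith
      then have "cmod ((w - c) - S ^ n * (w - 1)) / cmod (c - S) \<le> ((1 - \<bar>s\<bar>) / 4) / (1 - \<bar>s\<bar>)"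
        using cs s by (intro frac_le) auto
      also have "\<dots> = 1/4" using s by simp
      finally show ?thesis unfolding eq by (simp add: norm_divide)
    qed
    have Lb: "cmod (Ln (gn w / g0)) \<le> 1/2" "gn w / g0 \<notin> \<real>\<^sub>\<le>\<^sub>0" "gn w / g0 \<noteq> 0"
      if w: "w \<in> cball c \<rho>" for w
    proof -
      have k: "cmod (gn w / g0 - 1) \<le> 1/4" using key[OF w] .
      have "cmod (Ln (1 + (gn w / g0 - 1))) \<le> 2 * cmod (gn w / g0 - 1)"
        using k by (intro norm_Ln_le) auto
      then show "cmod (Ln (gn w / g0)) \<le> 1/2" using k by simp
      have "\<bar>Re (gn w / g0 - 1)\<bar> \<le> 1/4" using abs_Re_le_cmod[of "gn w / g0 - 1"] k by linarith
      then have "\<bar>Re (gn w / g0) - 1\<bar> \<le> 1/4" by simp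
      moreover have "- (Re (gn w / g0) - 1) \<le> \<bar>Re (gn w / g0) - 1\<bar>" by (rule abs_ge_minus_self)
      ultimately have "Re (gn w / g0) > 0" by linarith
      then show "gn w / g0 \<notin> \<real>\<^sub>\<le>\<^sub>0" "gn w / g0 \<noteq> 0" by (auto simp: complex_nonpos_Reals_iff)
    qed
    have cont: "continuous_on (cball c \<rho>) \<phi>"
    proof -
      have nC: "(of_nat n :: complex) \<noteq> 0" using n0 by simp
      show ?thesis
      unfolding \<phi>_def using Lb(2) nC unfolding gn_def
      by (intro continuous_intros) auto
    qed
    have maps: "\<phi> \<in> cball c \<rho> \<rightarrow> cball c \<rho>"
    proof
      fix w assume w: "w \<in> cball c \<rho>"
      define E where "E = (K + Ln (gn w / g0)) / of_nat n"
      have "cmod (K + Ln (gn w / g0)) \<le> M + 1/2"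
        using norm_triangle_ineq[of K "Ln (gn w / g0)"] K Lb(1)[OF w] by linarith
      then have E: "cmod E \<le> (M + 1/2) / real n"
        using n0 by (simp add: E_def norm_divide divide_right_mono)
      have eqd: "3/2 * (M + 1/2) / real n = 3/2 * ((M + 1/2) / real n)" by simp
      have "cmod E \<le> 1/2" using E Nm(3) unfolding eqd by linarith
      then have "cmod (exp E - 1) \<le> 3/2 * cmod E" by (rule norm_exp_bounds(2))
      also have "\<dots> \<le> 3/2 * ((M + 1/2) / real n)" using E by (intro mult_left_mono) auto
      also have "\<dots> < \<rho>" using Nm(2) unfolding eqd by simp
      finally have "cmod (c * (exp E - 1)) \<le> \<rho>" using c by (simp add: norm_mult)
      then show "\<phi> w \<in> cball c \<rho>"
        by (simp add: \<phi>_def E_def dist_norm algebra_simps norm_minus_commute)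
    qed
    obtain w where w: "w \<in> cball c \<rho>" "\<phi> w = w"
      using brouwer_ball[OF \<rho>(1) cont maps] by blast
    have "w ^ n = c ^ n * exp (K + Ln (gn w / g0))"
    proof -
      have "w ^ n = c ^ n * exp ((K + Ln (gn w / g0)) / of_nat n) ^ n"
        using w(2) by (metis \<phi>_def power_mult_distrib)
      also have "exp ((K + Ln (gn w / g0)) / of_nat n) ^ n = exp (of_nat n * ((K + Ln (gn w / g0)) / of_nat n))"
        by (rule exp_of_nat_mult[symmetric])
      also have "of_nat n * ((K + Ln (gn w / g0)) / of_nat n) = K + Ln (gn w / g0)"
        using n0 by simp
      finally show ?thesis .
    qed
    also have "\<dots> = c ^ n * ((g0 / c ^ n) * (gn w / g0))"
      using g0 c Lb(3)[OF w(1)] by (simp add: K_def exp_add)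
    also have "\<dots> = gn w"
    proof -
      have c0: "c ^ n \<noteq> 0" using c(1) by auto
      then show ?thesis using g0 by (simp add: field_simps)
    qed
    finally have wn: "w ^ n = gn w" .
    have wc: "cmod (w - c) \<le> \<rho>" using w by (simp add: dist_norm norm_minus_commute)
    have w1: "w \<noteq> 1" using wc \<rho>(3) by (auto simp: norm_minus_commute)
    have wS: "w \<noteq> S" using wc \<rho>(4) cs s by (auto simp: norm_minus_commute)
    have T: "(1 - S) * w ^ (m+2) - (1 - S ^ (m+2)) * w + S * (1 - S ^ (m+1)) = 0"
    proof -
      have "(1 - S) * w ^ n = (w - S) - S ^ n * (w - 1)" using wn s1 by (simp add: gn_def)
      then show ?thesis by (simp add: n_def algebra_simps)
    qed
    have "(w - 1) * (w - S) * (1 - S) * EE s m w = 0" using EE_T[of w s m] T by (simp add: S_def)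
    then have "EE s m w = 0" using w1 wS s1 by simp
    moreover have "w \<in> ball w0 r"
      using norm_triangle_ineq[of "w - c" "c - w0"] wc c \<rho> by (simp add: dist_norm norm_minus_commute)
    ultimately show "\<exists>w\<in>ball w0 r. EE s m w = 0" by blast
  qed
  then show ?thesis by blast
qed


lemma geom_fps: "(\<lambda>t::complex. inverse (1 - x * t)) has_fps_expansion Abs_fps (\<lambda>k. x^k)"
proof -
  have "(\<lambda>t::complex. 1 - x * t) has_fps_expansion 1 - fps_const x * fps_X"
    by (intro fps_expansion_intros)
  then have "(\<lambda>t. inverse (1 - x * t)) has_fps_expansion inverse (1 - fps_const x * fps_X)"
    by (rule has_fps_expansion_inverse) simp
  also have "inverse (1 - fps_const x * fps_X) = Abs_fps (\<lambda>k. x^k)"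
    using one_minus_const_fps_X_neg_power'[of 1 x] by simp
  finally show ?thesis .
qed

lemma P_formula:
  fixes a b c :: real and u v :: complex
  assumes Q: "\<And>t. of_real a * t^2 + of_real b * t + of_real c = of_real c * ((1 - v * t) * (1 - u * t))"
    and c: "c \<noteq> 0"
  shows "gen_seq (\<lambda>t z. 1 / ((of_real a * t^2 + of_real b * t + of_real c) * (1 - t * z))) m z
       = (1 / of_real c) * (\<Sum>i=0..m. (\<Sum>j=0..i. v^j * u^(i-j)) * z^(m-i))"
proof -
  have feq: "(\<lambda>t. 1 / ((of_real a * t^2 + of_real b * t + of_real c) * (1 - t * z))) =
     (\<lambda>t. (1 / of_real c) * ((inverse (1 - v * t) * inverse (1 - u * t)) * inverse (1 - z * t)))"
    by (rule ext) (simp only: Q, simp add: divide_inverse inverse_mult_distrib mult_ac)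
  have "(\<lambda>t. (1 / complex_of_real c) * ((inverse (1 - v * t) * inverse (1 - u * t)) * inverse (1 - z * t)))
     has_fps_expansion fps_const (1 / of_real c) * ((Abs_fps (\<lambda>k. v^k) * Abs_fps (\<lambda>k. u^k)) * Abs_fps (\<lambda>k. z^k))"
    by (intro has_fps_expansion_cmult_left has_fps_expansion_mult geom_fps)
  from fps_nth_fps_expansion[OF this, of m]
  have "gen_seq (\<lambda>t z. 1 / ((of_real a * t^2 + of_real b * t + of_real c) * (1 - t * z))) m z =
     (1 / of_real c) * ((Abs_fps (\<lambda>k. v^k) * Abs_fps (\<lambda>k. u^k)) * Abs_fps (\<lambda>k. z^k)) $ m"
    unfolding gen_seq_def feq[symmetric] fps_mult_left_const_nth by simp
  also have "((Abs_fps (\<lambda>k. v^k) * Abs_fps (\<lambda>k. u^k)) * Abs_fps (\<lambda>k. z^k)) $ m =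
      (\<Sum>i=0..m. (\<Sum>j=0..i. v^j * u^(i-j)) * z^(m-i))"
    by (simp add: fps_mult_nth)
  finally show ?thesis .
qed

lemma scale_sum:
  fixes u :: complex
  assumes "v = of_real s * u"
  shows "(\<Sum>i=0..m. (\<Sum>j=0..i. v^j * u^(i-j)) * (u*w)^(m-i)) = u^m * EE s m w"
proof -
  have "(\<Sum>i=0..m. (\<Sum>j=0..i. v^j * u^(i-j)) * (u*w)^(m-i)) =
        (\<Sum>i=0..m. u^m * ((\<Sum>j=0..i. complex_of_real s ^ j) * w^(m-i)))"
  proof (rule sum.cong)
    fix i assume i: "i \<in> {0..m}"
    have "(\<Sum>j=0..i. v^j * u^(i-j)) = (\<Sum>j=0..i. u^i * complex_of_real s ^ j)"
    proof (rule sum.cong)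
      fix j assume j: "j \<in> {0..i}"
      have "v^j * u^(i-j) = complex_of_real s ^ j * (u^j * u^(i-j))" using assms by (simp add: power_mult_distrib)
      also have "u^j * u^(i-j) = u^i" using j by (simp flip: power_add)
      finally show "v^j * u^(i-j) = u^i * complex_of_real s ^ j" by simp
    qed simp
    also have "\<dots> = u^i * (\<Sum>j=0..i. complex_of_real s ^ j)" by (simp add: sum_distrib_left)
    finally have 1: "(\<Sum>j=0..i. v^j * u^(i-j)) = u^i * (\<Sum>j=0..i. complex_of_real s ^ j)" .
    have 2: "u^i * u^(m-i) = u^m" using i by (simp flip: power_add)
    show "(\<Sum>j=0..i. v^j * u^(i-j)) * (u*w)^(m-i) = u^m * ((\<Sum>j=0..i. complex_of_real s ^ j) * w^(m-i))"
      unfolding 1 2[symmetric] by (simp add: power_mult_distrib algebra_simps)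
  qed simp
  also have "\<dots> = u^m * EE s m w" by (simp add: EE_def sum_distrib_left)
  finally show ?thesis .
qed


theorem theorem3:
  fixes a b c \<alpha> :: real and P :: "nat \<Rightarrow> complex \<Rightarrow> complex"
  assumes "a \<noteq> 0" "b \<noteq> 0" "c \<noteq> 0" "b^2 - 4*a*c > 0"
    and "P = gen_seq (\<lambda>t z. 1 / ((of_real a * t^2 + of_real b * t + of_real c) * (1 - t * z)))"
    and "a * \<alpha>^2 + b * \<alpha> + c = 0"
    and "\<forall>s::complex. of_real a * s^2 + of_real b * s + of_real c = 0 \<longrightarrow> \<bar>\<alpha>\<bar> \<le> cmod s"
  shows "liminf_zeros P = limsup_zeros P \<and> liminf_zeros P = {z. cmod z = 1 / \<bar>\<alpha>\<bar>}"
proof -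
  note a = assms(1) and b = assms(2) and c = assms(3) and disc = assms(4)
    and Pdef = assms(5) and root = assms(6) and minr = assms(7)
  define \<beta> where "\<beta> = - b / a - \<alpha>"
  have ab: "\<alpha> * \<beta> = c / a"
    using root a by (simp add: \<beta>_def field_simps power2_eq_square; simp add: algebra_simps)
  have \<alpha>0: "\<alpha> \<noteq> 0" using root c by auto
  have \<beta>0: "\<beta> \<noteq> 0" using ab c a by auto
  have l1: "a * \<beta> + b = - a * \<alpha>" using a by (simp add: \<beta>_def field_simps)
  have "a * \<beta>^2 + b * \<beta> + c = \<beta> * (a * \<beta> + b) + c" by (simp add: power2_eq_square algebra_simps)
  also have "\<dots> = - a * (\<alpha> * \<beta>) + c" unfolding l1 by (simp add: algebra_simps)
  also have "\<dots> = 0" using ab a by simp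
  finally have broot: "a * \<beta>^2 + b * \<beta> + c = 0" .
  have "of_real a * (complex_of_real \<beta>)^2 + of_real b * of_real \<beta> + of_real c = of_real (a * \<beta>^2 + b * \<beta> + c)"
    by simp
  then have "of_real a * (complex_of_real \<beta>)^2 + of_real b * of_real \<beta> + of_real c = 0"
    using broot by simp
  then have "\<bar>\<alpha>\<bar> \<le> cmod (complex_of_real \<beta>)" using minr by blast
  then have le: "\<bar>\<alpha>\<bar> \<le> \<bar>\<beta>\<bar>" by simp
  have ne: "\<bar>\<alpha>\<bar> \<noteq> \<bar>\<beta>\<bar>"
  proof
    assume "\<bar>\<alpha>\<bar> = \<bar>\<beta>\<bar>"
    then have "\<beta> = \<alpha> \<or> \<beta> = - \<alpha>" by (auto simp: abs_eq_iff)
    then show False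
    proof
      assume e: "\<beta> = \<alpha>"
      then have "2 * a * \<alpha> = - b" using a by (simp add: \<beta>_def field_simps)
      moreover have "a * \<alpha>^2 = c" using ab e a by (simp add: field_simps power2_eq_square)
      ultimately have "b^2 = 4 * a * c"
      proof -
        assume h1: "2 * a * \<alpha> = - b" and h2: "a * \<alpha>^2 = c"
        have "b = - (2 * a * \<alpha>)" using h1 by simp
        then have "b^2 = 4 * a * (a * \<alpha>^2)" by (simp add: power2_eq_square algebra_simps)
        then show ?thesis using h2 by simp
      qed
      then show False using disc by simp
    next
      assume "\<beta> = - \<alpha>"
      then have "b / a = 0" by (simp add: \<beta>_def)
      then show False using a b by simp
    qed
  qed
  define s where "s = \<alpha> / \<beta>"
  have s1: "\<bar>s\<bar> < 1" using le ne \<beta>0 by (simp add: s_def abs_divide)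
  define u where "u = complex_of_real (1 / \<alpha>)"
  define v where "v = complex_of_real (1 / \<beta>)"
  have u0: "u \<noteq> 0" using \<alpha>0 by (simp add: u_def)
  have vsu: "v = of_real s * u" using \<alpha>0 by (simp add: u_def v_def s_def)
  have r1: "c * (1/\<alpha> * (1/\<beta>)) = a" using ab \<alpha>0 \<beta>0 a by (simp add: field_simps)
  have r2: "c * (1/\<alpha> + 1/\<beta>) = - b"
  proof -
    have "c * (1/\<alpha> + 1/\<beta>) = c * (\<alpha> + \<beta>) / (\<alpha> * \<beta>)" using \<alpha>0 \<beta>0 by (simp add: field_simps)
    also have "\<alpha> + \<beta> = - b / a" by (simp add: \<beta>_def)
    finally show ?thesis unfolding ab using a c by (simp add: field_simps)
  qed
  have Q: "of_real a * t^2 + of_real b * t + of_real c = of_real c * ((1 - v * t) * (1 - u * t))" for t :: complex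
  proof -
    have "of_real c * ((1 - v * t) * (1 - u * t)) = of_real c - complex_of_real (c * (1/\<alpha> + 1/\<beta>)) * t + complex_of_real (c * (1/\<alpha> * (1/\<beta>))) * t^2"
      by (simp add: u_def v_def algebra_simps power2_eq_square)
    also have "\<dots> = of_real a * t^2 + of_real b * t + of_real c" unfolding r1 r2 by simp
    finally show ?thesis by simp
  qed
  have PE: "P m (u * w) = (u^m / of_real c) * EE s m w" for m w
    unfolding Pdef P_formula[OF Q c] scale_sum[OF vsu] by simp
  have PZ: "P m (u * w) = 0 \<longleftrightarrow> EE s m w = 0" for m w
    using PE u0 c by simp
  have ua: "u * (of_real \<alpha> * z) = z" for z using \<alpha>0 by (simp add: u_def)
  have nu: "cmod u = 1 / \<bar>\<alpha>\<bar>" by (simp add: u_def norm_divide)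
  have PZ': "P m z = 0 \<longleftrightarrow> EE s m (of_real \<alpha> * z) = 0" for m z
    using PZ[of m "of_real \<alpha> * z"] ua by simp
  have dist_scale: "dist (of_real \<alpha> * z0) (of_real \<alpha> * z) = \<bar>\<alpha>\<bar> * dist z0 z" for z0 z :: complex
    by (simp add: dist_norm norm_mult flip: right_diff_distrib)
  have A: "liminf_zeros P \<subseteq> limsup_zeros P"
  proof
    fix z assume "z \<in> liminf_zeros P"
    then have h: "\<forall>r>0. \<exists>N. \<forall>m>N. ball z r \<inter> zero_set (P m) \<noteq> {}" by (simp add: liminf_zeros_def)
    show "z \<in> limsup_zeros P" unfolding limsup_zeros_def
    proof (intro CollectI allI impI)
      fix r :: real and N :: nat assume r: "r > 0"
      obtain N' where "\<forall>m>N'. ball z r \<inter> zero_set (P m) \<noteq> {}" using h r by blast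
      then show "\<exists>m>N. ball z r \<inter> zero_set (P m) \<noteq> {}" by (intro exI[of _ "Suc (max N N')"]) auto
    qed
  qed
  have B: "limsup_zeros P \<subseteq> {z. cmod z = 1 / \<bar>\<alpha>\<bar>}"
  proof
    fix z0 assume z0: "z0 \<in> limsup_zeros P"
    show "z0 \<in> {z. cmod z = 1 / \<bar>\<alpha>\<bar>}"
    proof (rule ccontr)
      assume nz: "z0 \<notin> {z. cmod z = 1 / \<bar>\<alpha>\<bar>}"
      define w0 where "w0 = of_real \<alpha> * z0"
      have "cmod w0 \<noteq> 1" using nz \<alpha>0 by (auto simp: w0_def norm_mult field_simps)
      then have "cmod w0 > 1 \<or> cmod w0 < 1" by linarith
      then obtain r N where r: "r > 0" and rN: "\<forall>m>N. \<forall>w\<in>ball w0 r. EE s m w \<noteq> 0"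
        using C1[OF s1] C2[OF s1] by blast
      have "r / \<bar>\<alpha>\<bar> > 0" using r \<alpha>0 by simp
      then obtain m where m: "m > N" "ball z0 (r / \<bar>\<alpha>\<bar>) \<inter> zero_set (P m) \<noteq> {}"
        using z0 unfolding limsup_zeros_def by blast
      then obtain z where z: "dist z0 z < r / \<bar>\<alpha>\<bar>" "P m z = 0" by (auto simp: zero_set_def)
      have "dist w0 (of_real \<alpha> * z) < r" using z(1) \<alpha>0 unfolding w0_def dist_scale by (simp add: field_simps)
      then show False using rN m(1) z(2) PZ' by auto
    qed
  qed
  have C: "{z. cmod z = 1 / \<bar>\<alpha>\<bar>} \<subseteq> liminf_zeros P"
  proof
    fix z0 assume z0: "z0 \<in> {z. cmod z = 1 / \<bar>\<alpha>\<bar>}"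
    define w0 where "w0 = of_real \<alpha> * z0"
    have w0: "cmod w0 = 1" using z0 \<alpha>0 by (simp add: w0_def norm_mult)
    show "z0 \<in> liminf_zeros P" unfolding liminf_zeros_def
    proof (intro CollectI allI impI)
      fix r :: real assume r: "r > 0"
      have "r * \<bar>\<alpha>\<bar> > 0" using r \<alpha>0 by simp
      from C3[OF s1 w0 this] obtain N where N: "\<forall>m>N. \<exists>w\<in>ball w0 (r * \<bar>\<alpha>\<bar>). EE s m w = 0" by blast
      have "\<forall>m>N. ball z0 r \<inter> zero_set (P m) \<noteq> {}"
      proof (intro allI impI)
        fix m assume "m > N"
        then obtain w where w: "dist w0 w < r * \<bar>\<alpha>\<bar>" "EE s m w = 0" using N by auto
        have "P m (u * w) = 0" using PZ w by simp
        moreover have "dist z0 (u * w) < r"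
        proof -
          have "dist w0 (of_real \<alpha> * (u * w)) < r * \<bar>\<alpha>\<bar>" using w ua[of "u * w"] \<alpha>0 by (simp add: u_def)
          then show ?thesis unfolding w0_def dist_scale using \<alpha>0 by simp
        qed
        ultimately show "ball z0 r \<inter> zero_set (P m) \<noteq> {}" by (auto simp: zero_set_def)
      qed
      then show "\<exists>N. \<forall>m>N. ball z0 r \<inter> zero_set (P m) \<noteq> {}" by blast
    qed
  qed
  show ?thesis using A B C by blast
qed

end
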